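(* Let $(\mathcal{F}_t)$ be a filtration. Let $\varepsilon_t = \sigma_t z_t$ with $\sigma_t = \exp(H_t)$, $H_t = \bar{H}_t + h_t$, where $\bar{H}_t = E\{H_t\mid\mathcal{F}_{t-1}\}$ is $\mathcal{F}_{t-1}$-measurable, $(h_t)$ is i.i.d. with Laplace density $\frac{1}{2\Delta}\exp(-|x|/\Delta)$, $\Delta = E|h_t|>0$, and $(z_t)$ is i.i.d. $\mathcal{N}(0,1)$, with $z_t$, $h_t$ mutually independent and independent of $\mathcal{F}_{t-1}$. Then, conditionally on $\mathcal{F}_{t-1}$, $\varepsilon_t$ has probability density $$p_\varepsilon(\varepsilon_t\mid\mathcal{F}_{t-1}) = \frac{1}{4\sqrt{\pi}\Delta}\left(\sqrt{2}e^{\bar{H}_t}\right)^{-1/\Delta}\Gamma\!\left(\frac{1-1/\Delta}{2}, \frac{\varepsilon_t^2}{2e^{2\bar{H}_t}}\right)|\varepsilon_t|^{1/\Delta - 1} + \frac{1}{4\sqrt{\pi}\Delta}\left(\sqrt{2}e^{\bar{H}_t}\right)^{1/\Delta}\gamma\!\left(\frac{1+1/\Delta}{2}, \frac{\varepsilon_t^2}{2e^{2\bar{H}_t}}\right)|\varepsilon_t|^{-1/\Delta - 1}.$$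
   Context: $\Gamma(a,b) = \int_b^\infty x^{a-1}e^{-x}\,dx$ is the upper incomplete gamma function and $\gamma(a,b) = \int_0^b x^{a-1}e^{-x}\,dx$ is the lower incomplete gamma function. *)

theory Defs
  imports "HOL-Probability.Probability"
begin

definition upper_inc_gamma :: "real \<Rightarrow> real \<Rightarrow> real" where
  "upper_inc_gamma a b = (\<integral>x\<in>{b<..}. x powr (a - 1) * exp (- x) \<partial>lborel)"

definition lower_inc_gamma :: "real \<Rightarrow> real \<Rightarrow> real" where
  "lower_inc_gamma a b = (\<integral>x\<in>{0<..<b}. x powr (a - 1) * exp (- x) \<partial>lborel)"

definition laplace_density :: "real \<Rightarrow> real \<Rightarrow> real" where
  "laplace_density \<Delta> x = exp (- \<bar>x\<bar> / \<Delta>) / (2 * \<Delta>)"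

text \<open>The claimed conditional density of eps_t, given the value c of Hbar_t, at the point x.\<close>
definition eps_density :: "real \<Rightarrow> real \<Rightarrow> real \<Rightarrow> real" where
  "eps_density \<Delta> c x =
     1 / (4 * sqrt pi * \<Delta>) * (sqrt 2 * exp c) powr (- 1 / \<Delta>)
       * upper_inc_gamma ((1 - 1 / \<Delta>) / 2) (x\<^sup>2 / (2 * exp (2 * c))) * \<bar>x\<bar> powr (1 / \<Delta> - 1)
   + 1 / (4 * sqrt pi * \<Delta>) * (sqrt 2 * exp c) powr (1 / \<Delta>)
       * lower_inc_gamma ((1 + 1 / \<Delta>) / 2) (x\<^sup>2 / (2 * exp (2 * c))) * \<bar>x\<bar> powr (- 1 / \<Delta> - 1)"

definition rv_events :: "'a measure \<Rightarrow> ('a \<Rightarrow> real) \<Rightarrow> 'a set set" where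
  "rv_events M X = {X -` A \<inter> space M | A. A \<in> sets borel}"

end

theory Submission imports Defs "HOL-Analysis.Analysis" begin

lemma set_integrable_lborel_lebesgue:
  fixes f :: "real \<Rightarrow> real"
  assumes "set_integrable lborel S f"
  shows "f absolutely_integrable_on S"
  using assms unfolding set_integrable_def
  by (subst integrable_completion) (auto dest: borel_measurable_integrable)

lemma subst_gamma:
  fixes a b :: real and S T :: "real set"
  assumes b: "b > 0" and S: "S \<in> sets lborel" and T: "T = (\<lambda>u. b * exp (-2*u)) ` S"
    and int: "set_integrable lborel T (\<lambda>y. y powr (a-1) * exp (-y))"
  shows "((\<lambda>u. (2*b*exp(-2*u)) * ((b*exp(-2*u)) powr (a-1) * exp (-(b*exp(-2*u)))))
          has_integral (\<integral>y\<in>T. y powr (a-1) * exp (-y) \<partial>lborel)) S"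
proof -
  let ?F = "\<lambda>y. y powr (a-1) * exp (-y)"
  let ?g = "\<lambda>u. b * exp (-2*u)"
  have Sl: "S \<in> sets lebesgue" using S by simp
  have der: "(?g has_field_derivative (- 2*b*exp(-2*u))) (at u within S)" for u
    by (auto intro!: derivative_eq_intros)
  have inj: "inj_on ?g S" using b by (auto simp: inj_on_def)
  have abs: "?F absolutely_integrable_on ?g ` S"
    using set_integrable_lborel_lebesgue[OF int] T by simp
  have eq: "integral (?g ` S) ?F = (\<integral>y\<in>T. ?F y \<partial>lborel)"
    using set_borel_integral_eq_integral(2)[OF int] T by simp
  have "(\<lambda>x. \<bar>- 2*b*exp(-2*x)\<bar> * ?F (?g x)) absolutely_integrable_on S \<and>
           integral S (\<lambda>x. \<bar>- 2*b*exp(-2*x)\<bar> * ?F (?g x)) = (\<integral>y\<in>T. ?F y \<partial>lborel)"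
    using has_absolute_integral_change_of_variables_1'[OF Sl der inj, of ?F "(\<integral>y\<in>T. ?F y \<partial>lborel)"] abs eq by blast
  moreover have "\<bar>- 2*b*exp(-2*x)\<bar> = 2*b*exp(-2*x)" for x using b by simp
  ultimately have "(\<lambda>u. (2*b*exp(-2*u)) * ((b*exp(-2*u)) powr (a-1) * exp (-(b*exp(-2*u))))) absolutely_integrable_on S \<and>
     integral S (\<lambda>u. (2*b*exp(-2*u)) * ((b*exp(-2*u)) powr (a-1) * exp (-(b*exp(-2*u))))) = (\<integral>y\<in>T. ?F y \<partial>lborel)"
    by simp
  then show ?thesis
    using set_lebesgue_integral_eq_integral(1) has_integral_iff by blast
qed

lemma gamma_int:
  fixes a :: real assumes a: "a > 0"
  shows "set_integrable lborel {0<..} (\<lambda>y. y powr (a-1) * exp (-y))"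
proof -
  have "((\<lambda>t. t powr (a - 1) / exp t) has_integral Gamma a) {0..}"
    by (rule Gamma_integral_real[OF a])
  hence "(\<lambda>t. t powr (a - 1) / exp t) absolutely_integrable_on {0..}"
    by (intro nonnegative_absolutely_integrable_1) (auto simp: integrable_on_def)
  hence "set_integrable lborel {0..} (\<lambda>t. t powr (a - 1) / exp t)"
    unfolding set_integrable_def
    by (subst (asm) integrable_completion) auto
  hence "set_integrable lborel {0<..} (\<lambda>t. t powr (a - 1) / exp t)"
    by (rule set_integrable_subset) auto
  thus ?thesis by (simp add: exp_minus field_simps)
qed

lemma upper_int:
  fixes a d b :: real assumes a: "a + d > 0" and d: "d \<ge> 0" and b: "b > 0"
  shows "set_integrable lborel {b<..} (\<lambda>y. y powr (a-1) * exp (-y))"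
proof (rule set_integrable_bound)
  show "set_integrable lborel {b<..} (\<lambda>y. b powr (-d) * (y powr ((a+d)-1) * exp (-y)))"
    by (intro set_integrable_mult_right set_integrable_subset[OF gamma_int[OF a]]) (use b in auto)
  show "set_borel_measurable lborel {b<..} (\<lambda>y. y powr (a - 1) * exp (- y))"
    unfolding set_borel_measurable_def by measurable
  show "AE x in lborel. x \<in> {b<..} \<longrightarrow> norm (x powr (a - 1) * exp (- x)) \<le> norm (b powr (-d) * (x powr ((a+d)-1) * exp (-x)))"
  proof (intro AE_I2 impI)
    fix x assume x: "x \<in> {b<..}"
    hence xp: "x > 0" using b by simp
    have "x powr (a-1) = x powr (-d) * x powr ((a+d)-1)"
      by (simp add: powr_add[symmetric])
    also have "\<dots> \<le> b powr (-d) * x powr ((a+d)-1)"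
      by (intro mult_right_mono powr_mono2') (use x b d in auto)
    finally show "norm (x powr (a - 1) * exp (- x)) \<le> norm (b powr (-d) * (x powr ((a+d)-1) * exp (-x)))"
      using xp by (simp add: abs_mult)
  qed
qed

lemma image_pos: assumes b: "b > (0::real)"
  shows "(\<lambda>u. b * exp (-2*u)) ` {0<..} = {0<..<b}"
proof (intro equalityI subsetI)
  fix y assume "y \<in> (\<lambda>u. b * exp (-2*u)) ` {0<..}"
  then obtain u :: real where "u > 0" "y = b * exp (-2*u)" by auto
  thus "y \<in> {0<..<b}" using b by (auto simp: mult_less_cancel_left1)
next
  fix y :: real assume y: "y \<in> {0<..<b}"
  hence "y = b * exp (-2 * (- ln (y/b) / 2))" using b by simp
  moreover have "- ln (y/b) / 2 \<in> {0<..}" using y b by (simp add: ln_div)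
  ultimately show "y \<in> (\<lambda>u. b * exp (-2*u)) ` {0<..}" by blast
qed

lemma image_neg: assumes b: "b > (0::real)"
  shows "(\<lambda>u. b * exp (-2*u)) ` {..<0} = {b<..}"
proof (intro equalityI subsetI)
  fix y assume "y \<in> (\<lambda>u. b * exp (-2*u)) ` {..<0}"
  then obtain u :: real where "u < 0" "y = b * exp (-2*u)" by auto
  thus "y \<in> {b<..}" using b by auto
next
  fix y :: real assume y: "y \<in> {b<..}"
  hence "y = b * exp (-2 * (- ln (y/b) / 2))" using b by simp
  moreover have "- ln (y/b) / 2 \<in> {..<0}" using y b by (simp add: ln_div)
  ultimately show "y \<in> (\<lambda>u. b * exp (-2*u)) ` {..<0}" by blast
qed

lemma integrand_id:
  fixes \<Delta> c x u s :: real
  assumes D: "\<Delta> > 0" and x: "x \<noteq> 0" and su: "\<bar>u\<bar> = s * u"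
  defines "b \<equiv> x\<^sup>2 / (2 * exp (2*c))"
  defines "a \<equiv> (1 + s / \<Delta>) / 2"
  shows "laplace_density \<Delta> u * std_normal_density (x / exp (c+u)) / exp (c+u)
       = exp (-c) / (4 * \<Delta> * sqrt (2*pi) * b powr a) *
         ((2*b*exp(-2*u)) * ((b*exp(-2*u)) powr (a-1) * exp (-(b*exp(-2*u)))))"
proof -
  have b: "b > 0" using x unfolding b_def by simp
  have e1: "(x / exp (c+u))\<^sup>2 / 2 = b * exp (-2*u)"
    unfolding b_def by (simp add: power_divide field_simps exp_add[symmetric] power2_eq_square exp_minus)
  have e2: "(b*exp(-2*u)) powr (a-1) = b powr a / b * exp (-2*u*(a-1))"
  proof -
    have "exp(-2*u*(a-1)) = exp(-(2*u*a)) / exp(-(2*u))" by (simp add: exp_diff[symmetric] algebra_simps)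
    thus ?thesis using b by (simp add: powr_mult exp_powr_real powr_diff)
  qed
  have "laplace_density \<Delta> u * std_normal_density (x / exp (c+u)) / exp (c+u)
      = exp (- (s*u) / \<Delta>) / (2*\<Delta>) * (exp (- (b * exp (-2*u))) / sqrt (2*pi)) / exp (c+u)"
  proof -
    have l: "laplace_density \<Delta> u = exp (- (s*u) / \<Delta>) / (2*\<Delta>)"
      unfolding laplace_density_def using su by simp
    have n: "std_normal_density y = exp (-(y\<^sup>2/2)) / sqrt (2*pi)" for y :: real
      by (simp add: std_normal_density_def normal_density_def)
    show ?thesis unfolding l n e1 by simp
  qed
  also have "\<dots> = exp (- (s*u) / \<Delta> - (b * exp (-2*u)) - c - u) / (2*\<Delta> * sqrt (2*pi))"
  proof -
    have "exp (- (s*u) / \<Delta> - (b * exp (-2*u)) - c - u) = exp (- (s*u) / \<Delta>) * exp (- (b * exp (-2*u))) / exp (c+u)"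
      by (simp add: exp_add[symmetric] exp_diff[symmetric] algebra_simps)
    thus ?thesis by simp
  qed
  also have "\<dots> = exp (-c) / (4 * \<Delta> * sqrt (2*pi) * b powr a) *
         ((2*b*exp(-2*u)) * (b powr a / b * exp (-2*u*(a-1)) * exp (-(b*exp(-2*u)))))"
  proof -
    have "- (s*u) / \<Delta> - (b * exp (-2*u)) - c - u = -c + -2*u + -2*u*(a-1) + -(b*exp(-2*u))"
      unfolding a_def using D by (simp add: field_simps)
    hence "exp (- (s*u) / \<Delta> - (b * exp (-2*u)) - c - u) = exp (-c) * exp (-2*u) * exp (-2*u*(a-1)) * exp (-(b*exp(-2*u)))"
      by (simp add: exp_add[symmetric])
    thus ?thesis using b D by (simp add: ac_simps)
  qed
  finally show ?thesis using e2 by simp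
qed

lemma const_id:
  fixes \<Delta> c x t :: real
  assumes D: "\<Delta> > 0" and x: "x \<noteq> 0"
  shows "exp (-c) / (4 * \<Delta> * sqrt (2*pi) * (x\<^sup>2 / (2 * exp (2*c))) powr ((1+t)/2))
       = 1 / (4 * sqrt pi * \<Delta>) * (sqrt 2 * exp c) powr t * \<bar>x\<bar> powr (-t-1)"
proof -
  define L where "L = ln \<bar>x\<bar>"
  have xa: "\<bar>x\<bar> > 0" using x by simp
  have lb: "ln (x\<^sup>2 / (2 * exp (2*c))) = 2*L - ln 2 - 2*c"
  proof -
    have "x\<^sup>2 = \<bar>x\<bar> * \<bar>x\<bar>" by (simp add: power2_eq_square)
    hence "ln (x\<^sup>2) = 2 * L" unfolding L_def using xa by (simp add: ln_mult del: abs_mult_self_eq)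
    thus ?thesis using x by (simp add: ln_div ln_mult)
  qed
  have bp: "(x\<^sup>2 / (2 * exp (2*c))) powr ((1+t)/2) = exp ((1+t)/2 * (2*L - ln 2 - 2*c))"
    using x by (simp add: powr_def lb)
  have s2: "sqrt 2 = exp (ln 2 / 2)"
    by (simp add: powr_half_sqrt[symmetric] powr_def)
  have p1: "(sqrt 2 * exp c) powr t = exp (t * (ln 2 / 2 + c))"
    by (simp add: powr_def s2 exp_add[symmetric] ln_mult)
  have p2: "\<bar>x\<bar> powr (-t-1) = exp ((-t-1) * L)"
    using xa by (simp add: powr_def L_def)
  have sp: "sqrt (2*pi) = sqrt 2 * sqrt pi" by (simp add: real_sqrt_mult)
  have key: "exp (-c) / (sqrt 2 * exp ((1+t)/2 * (2*L - ln 2 - 2*c))) = exp (t * (ln 2 / 2 + c)) * exp ((-t-1) * L)"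
  proof -
    have "exp (-c) / (sqrt 2 * exp ((1+t)/2 * (2*L - ln 2 - 2*c))) = exp (-c - ln 2 / 2 - (1+t)/2 * (2*L - ln 2 - 2*c))"
      unfolding s2 by (simp add: exp_diff exp_add[symmetric])
    also have "-c - ln 2 / 2 - (1+t)/2 * (2*L - ln 2 - 2*c) = t * (ln 2 / 2 + c) + (-t-1) * L"
      by (simp add: field_simps)
    finally show ?thesis by (simp add: exp_add)
  qed
  show ?thesis unfolding bp p1 p2 sp
    using key D by (simp add: field_simps)
qed

lemma part:
  fixes \<Delta> c x s :: real and S :: "real set"
  assumes D: "\<Delta> > 0" and x: "x \<noteq> 0" and su: "\<And>u. u \<in> S \<Longrightarrow> \<bar>u\<bar> = s*u" and S: "S \<in> sets lborel"
    and int: "set_integrable lborel ((\<lambda>u. (x\<^sup>2/(2*exp(2*c))) * exp(-2*u)) ` S) (\<lambda>y. y powr ((1+s/\<Delta>)/2 - 1) * exp(-y))"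
  shows "(\<integral>\<^sup>+u. ennreal (laplace_density \<Delta> u * std_normal_density (x / exp (c+u)) / exp (c+u)) * indicator S u \<partial>lborel)
     = ennreal (exp(-c)/(4*\<Delta> * sqrt(2*pi)*(x\<^sup>2/(2*exp(2*c))) powr ((1+s/\<Delta>)/2)) *
         (\<integral>y\<in>(\<lambda>u. (x\<^sup>2/(2*exp(2*c))) * exp(-2*u)) ` S. y powr ((1+s/\<Delta>)/2 - 1) * exp(-y) \<partial>lborel))"
proof -
  define b where "b = x\<^sup>2/(2*exp(2*c))"
  define a where "a = (1+s/\<Delta>)/2"
  define K where "K = exp(-c)/(4*\<Delta> * sqrt(2*pi)* b powr a)"
  define I where "I = (\<integral>y\<in>(\<lambda>u. b * exp(-2*u)) ` S. y powr (a - 1) * exp(-y) \<partial>lborel)"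
  have b: "b > 0" using x unfolding b_def by simp
  have "((\<lambda>u. (2*b*exp(-2*u)) * ((b*exp(-2*u)) powr (a-1) * exp (-(b*exp(-2*u))))) has_integral I) S"
    unfolding I_def by (rule subst_gamma[OF b S refl]) (use int in \<open>simp add: a_def b_def\<close>)
  hence "((\<lambda>u. K * ((2*b*exp(-2*u)) * ((b*exp(-2*u)) powr (a-1) * exp (-(b*exp(-2*u)))))) has_integral K * I) S"
    by (rule has_integral_mult_right)
  hence h: "((\<lambda>u. laplace_density \<Delta> u * std_normal_density (x / exp (c+u)) / exp (c+u)) has_integral K * I) S"
    by (subst has_integral_cong[OF integrand_id[OF D x su]]) (auto simp: K_def a_def b_def)
  have "(\<integral>\<^sup>+u. ennreal (laplace_density \<Delta> u * std_normal_density (x / exp (c+u)) / exp (c+u)) * indicator S u \<partial>lborel)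
      = ennreal (K * I)"
    by (rule nn_integral_has_integral_lebesgue'[OF _ h])
       (use D in \<open>auto simp: laplace_density_def std_normal_density_def normal_density_def intro!: divide_nonneg_pos mult_nonneg_nonneg\<close>)
  thus ?thesis by (simp add: K_def I_def a_def b_def)
qed

lemma pointwise:
  fixes \<Delta> c x :: real
  assumes D: "\<Delta> > 0" and x: "x \<noteq> 0"
  shows "(\<integral>\<^sup>+u. ennreal (laplace_density \<Delta> u * std_normal_density (x / exp (c+u)) / exp (c+u)) \<partial>lborel)
     = ennreal (eps_density \<Delta> c x)"
proof -
  define f where "f u = laplace_density \<Delta> u * std_normal_density (x / exp (c+u)) / exp (c+u)" for u
  define b where "b = x\<^sup>2/(2*exp(2*c))"
  have b: "b > 0" using x unfolding b_def by simp
  have fm[measurable]: "f \<in> borel_measurable borel" unfolding f_def laplace_density_def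
    by measurable
  have "(\<integral>\<^sup>+u. ennreal (f u) \<partial>lborel) = (\<integral>\<^sup>+u. ennreal (f u) * indicator {0<..} u + ennreal (f u) * indicator {..<0} u \<partial>lborel)"
  proof (rule nn_integral_cong_AE)
    show "AE u in lborel. ennreal (f u) = ennreal (f u) * indicator {0<..} u + ennreal (f u) * indicator {..<0} u"
      using AE_lborel_singleton[of 0] by eventually_elim (auto simp: indicator_def)
  qed
  also have "\<dots> = (\<integral>\<^sup>+u. ennreal (f u) * indicator {0<..} u \<partial>lborel) + (\<integral>\<^sup>+u. ennreal (f u) * indicator {..<0} u \<partial>lborel)"
    by (rule nn_integral_add) auto
  also have "(\<integral>\<^sup>+u. ennreal (f u) * indicator {0<..} u \<partial>lborel)
     = ennreal (exp(-c)/(4*\<Delta> * sqrt(2*pi)*b powr ((1+1/\<Delta>)/2)) *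
         (\<integral>y\<in>{0<..<b}. y powr ((1+1/\<Delta>)/2 - 1) * exp(-y) \<partial>lborel))"
  proof -
    have "(1+1/\<Delta>)/2 > 0" using D by (simp add: add_pos_pos)
    hence int1: "set_integrable lborel {0<..<b} (\<lambda>y. y powr ((1+1/\<Delta>)/2 - 1) * exp(-y))"
      by (intro set_integrable_subset[OF gamma_int]) auto
    show ?thesis using part[OF D x, of "{0<..}" 1 c] image_pos[OF b] int1
      unfolding f_def b_def by simp
  qed
  also have "(\<integral>\<^sup>+u. ennreal (f u) * indicator {..<0} u \<partial>lborel)
     = ennreal (exp(-c)/(4*\<Delta> * sqrt(2*pi)*b powr ((1+(-1)/\<Delta>)/2)) *
         (\<integral>y\<in>{b<..}. y powr ((1+(-1)/\<Delta>)/2 - 1) * exp(-y) \<partial>lborel))"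
  proof -
    have "(1+(-1)/\<Delta>)/2 + 1/\<Delta> > 0" using D by (simp add: field_simps add_pos_pos)
    hence int1: "set_integrable lborel {b<..} (\<lambda>y. y powr ((1+(-1)/\<Delta>)/2 - 1) * exp(-y))"
      using D b by (intro upper_int[of _ "1/\<Delta>"]) auto
    show ?thesis using part[OF D x, of "{..<0}" "-1" c] image_neg[OF b] int1
      unfolding f_def b_def by simp
  qed
  finally have eq: "(\<integral>\<^sup>+u. ennreal (f u) \<partial>lborel) = ennreal (exp(-c)/(4*\<Delta> * sqrt(2*pi)*b powr ((1+1/\<Delta>)/2)) *
         (\<integral>y\<in>{0<..<b}. y powr ((1+1/\<Delta>)/2 - 1) * exp(-y) \<partial>lborel)) + ennreal (exp(-c)/(4*\<Delta> * sqrt(2*pi)*b powr ((1+(-1)/\<Delta>)/2)) *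
         (\<integral>y\<in>{b<..}. y powr ((1+(-1)/\<Delta>)/2 - 1) * exp(-y) \<partial>lborel))" .
  have n1: "0 \<le> (\<integral>y\<in>{0<..<b}. y powr ((1+1/\<Delta>)/2 - 1) * exp(-y) \<partial>lborel)"
    unfolding set_lebesgue_integral_def by (intro Bochner_Integration.integral_nonneg) (auto simp: indicator_def)
  have n2: "0 \<le> (\<integral>y\<in>{b<..}. y powr ((1+(-1)/\<Delta>)/2 - 1) * exp(-y) \<partial>lborel)"
    unfolding set_lebesgue_integral_def by (intro Bochner_Integration.integral_nonneg) (auto simp: indicator_def)
  have k1: "exp(-c)/(4*\<Delta> * sqrt(2*pi)*b powr ((1+1/\<Delta>)/2)) = 1 / (4 * sqrt pi * \<Delta>) * (sqrt 2 * exp c) powr (1 / \<Delta>) * \<bar>x\<bar> powr (- 1 / \<Delta> - 1)"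
    using const_id[OF D x, of c "1/\<Delta>"] unfolding b_def by simp
  have k2: "exp(-c)/(4*\<Delta> * sqrt(2*pi)*b powr ((1+(-1)/\<Delta>)/2)) = 1 / (4 * sqrt pi * \<Delta>) * (sqrt 2 * exp c) powr (- 1 / \<Delta>) * \<bar>x\<bar> powr (1 / \<Delta> - 1)"
    using const_id[OF D x, of c "-1/\<Delta>"] unfolding b_def by simp
  have pos: "0 \<le> exp(-c)/(4*\<Delta> * sqrt(2*pi)*b powr a)" for a
    using D by simp
  have "(\<integral>\<^sup>+u. ennreal (f u) \<partial>lborel) = ennreal (exp(-c)/(4*\<Delta> * sqrt(2*pi)*b powr ((1+1/\<Delta>)/2)) *
         (\<integral>y\<in>{0<..<b}. y powr ((1+1/\<Delta>)/2 - 1) * exp(-y) \<partial>lborel) + exp(-c)/(4*\<Delta> * sqrt(2*pi)*b powr ((1+(-1)/\<Delta>)/2)) *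
         (\<integral>y\<in>{b<..}. y powr ((1+(-1)/\<Delta>)/2 - 1) * exp(-y) \<partial>lborel))"
    unfolding eq by (intro ennreal_plus[symmetric] mult_nonneg_nonneg pos n1 n2)
  also have "\<dots> = ennreal (eps_density \<Delta> c x)"
    unfolding k1 k2 unfolding eps_density_def upper_inc_gamma_def lower_inc_gamma_def b_def
    by (simp add: algebra_simps)
  finally show ?thesis unfolding f_def .
qed

lemma lap_meas[measurable]: "laplace_density D \<in> borel_measurable borel"
  unfolding laplace_density_def by measurable

lemma affine_inner:
  fixes s :: real and B :: "real set" assumes s: "s > 0" and B[measurable]: "B \<in> sets borel"
  shows "(\<integral>\<^sup>+w. ennreal (std_normal_density w) * indicator B (s * w) \<partial>lborel)
       = (\<integral>\<^sup>+x. ennreal (std_normal_density (x / s) / s) * indicator B x \<partial>lborel)"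
proof -
  have "(\<integral>\<^sup>+x. ennreal (std_normal_density (x / s) / s) * indicator B x \<partial>lborel)
      = ennreal \<bar>s\<bar> * (\<integral>\<^sup>+w. ennreal (std_normal_density ((0 + s * w) / s) / s) * indicator B (0 + s * w) \<partial>lborel)"
    by (rule nn_integral_real_affine) (use s in auto)
  also have "\<dots> = (\<integral>\<^sup>+w. ennreal s * (ennreal (std_normal_density w / s) * indicator B (s * w)) \<partial>lborel)"
    using s by (subst nn_integral_cmult) auto
  also have "\<dots> = (\<integral>\<^sup>+w. ennreal (std_normal_density w) * indicator B (s * w) \<partial>lborel)"
  proof (rule nn_integral_cong)
    fix w
    have "ennreal s * ennreal (std_normal_density w / s) = ennreal (std_normal_density w)"
      using s by (subst ennreal_mult[symmetric]) auto
    thus "ennreal s * (ennreal (std_normal_density w / s) * indicator B (s * w)) = ennreal (std_normal_density w) * indicator B (s * w)"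
      by (simp add: mult.assoc[symmetric])
  qed
  finally show ?thesis by simp
qed

lemma kernel:
  fixes c \<Delta> :: real and B :: "real set" assumes B[measurable]: "B \<in> sets borel" and D: "\<Delta> > 0"
  shows "(\<integral>\<^sup>+u. ennreal (laplace_density \<Delta> u) * (\<integral>\<^sup>+w. ennreal (std_normal_density w) * indicator B (exp(c+u) * w) \<partial>lborel) \<partial>lborel)
       = (\<integral>\<^sup>+x\<in>B. ennreal (eps_density \<Delta> c x) \<partial>lborel)"
proof -
  have ld: "laplace_density \<Delta> u \<ge> 0" for u using D by (simp add: laplace_density_def)
  have "(\<integral>\<^sup>+u. ennreal (laplace_density \<Delta> u) * (\<integral>\<^sup>+w. ennreal (std_normal_density w) * indicator B (exp(c+u) * w) \<partial>lborel) \<partial>lborel)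
      = (\<integral>\<^sup>+u. (\<integral>\<^sup>+x. ennreal (laplace_density \<Delta> u * std_normal_density (x / exp (c+u)) / exp (c+u)) * indicator B x \<partial>lborel) \<partial>lborel)"
  proof (rule nn_integral_cong)
    fix u
    have "ennreal (laplace_density \<Delta> u) * (\<integral>\<^sup>+w. ennreal (std_normal_density w) * indicator B (exp(c+u) * w) \<partial>lborel)
       = ennreal (laplace_density \<Delta> u) * (\<integral>\<^sup>+x. ennreal (std_normal_density (x / exp (c+u)) / exp (c+u)) * indicator B x \<partial>lborel)"
      by (subst affine_inner) auto
    also have "\<dots> = (\<integral>\<^sup>+x. ennreal (laplace_density \<Delta> u) * (ennreal (std_normal_density (x / exp (c+u)) / exp (c+u)) * indicator B x) \<partial>lborel)"
      by (subst nn_integral_cmult) auto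
    also have "\<dots> = (\<integral>\<^sup>+x. ennreal (laplace_density \<Delta> u * std_normal_density (x / exp (c+u)) / exp (c+u)) * indicator B x \<partial>lborel)"
      by (intro nn_integral_cong) (simp add: ennreal_mult'[symmetric] ld mult.assoc[symmetric])
    finally show "ennreal (laplace_density \<Delta> u) * (\<integral>\<^sup>+w. ennreal (std_normal_density w) * indicator B (exp(c+u) * w) \<partial>lborel)
       = (\<integral>\<^sup>+x. ennreal (laplace_density \<Delta> u * std_normal_density (x / exp (c+u)) / exp (c+u)) * indicator B x \<partial>lborel)" .
  qed
  also have "\<dots> = (\<integral>\<^sup>+x. (\<integral>\<^sup>+u. ennreal (laplace_density \<Delta> u * std_normal_density (x / exp (c+u)) / exp (c+u)) * indicator B x \<partial>lborel) \<partial>lborel)"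
    by (rule lborel_pair.Fubini') measurable
  also have "\<dots> = (\<integral>\<^sup>+x. (\<integral>\<^sup>+u. ennreal (laplace_density \<Delta> u * std_normal_density (x / exp (c+u)) / exp (c+u)) \<partial>lborel) * indicator B x \<partial>lborel)"
    by (intro nn_integral_cong nn_integral_multc) measurable
  also have "\<dots> = (\<integral>\<^sup>+x\<in>B. ennreal (eps_density \<Delta> c x) \<partial>lborel)"
  proof (rule nn_integral_cong_AE)
    show "AE x in lborel. (\<integral>\<^sup>+u. ennreal (laplace_density \<Delta> u * std_normal_density (x / exp (c+u)) / exp (c+u)) \<partial>lborel) * indicator B x
        = ennreal (eps_density \<Delta> c x) * indicator B x"
      using AE_lborel_singleton[of 0] by eventually_elim (simp add: pointwise[OF D])
  qed
  finally show ?thesis .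
qed

lemma (in prob_space) indeps:
  fixes N :: "'a measure" and X H Z :: "'a \<Rightarrow> real" and A :: "'a set"
  assumes sub: "subalgebra M N" and Xm: "X \<in> borel_measurable N"
   and Hm: "H \<in> borel_measurable M" and Zm: "Z \<in> borel_measurable M"
   and ind: "indep_sets (\<lambda>i::nat. if i = 0 then sets N else if i = 1 then rv_events M Z else rv_events M H) {0,1,2}"
   and A: "A \<in> sets N"
  shows "indep_var lborel H lborel Z"
    and "indep_var (lborel \<Otimes>\<^sub>M lborel) (\<lambda>\<omega>. (indicator A \<omega> :: real, X \<omega>)) (lborel \<Otimes>\<^sub>M lborel) (\<lambda>\<omega>. (H \<omega>, Z \<omega>))"
proof -
  define E where "E = (\<lambda>i::nat. if i = 0 then sets N else if i = 1 then rv_events M Z else rv_events M H)"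
  have spN: "space N = space M" and sN: "sets N \<subseteq> sets M" using sub unfolding subalgebra_def by auto
  have rvI: "Int_stable (rv_events M V)" for V :: "'a \<Rightarrow> real"
    unfolding Int_stable_def rv_events_def
  proof safe
    fix A B :: "real set" assume "A \<in> sets borel" "B \<in> sets borel"
    thus "\<exists>C. (V -` A \<inter> space M) \<inter> (V -` B \<inter> space M) = V -` C \<inter> space M \<and> C \<in> sets borel"
      by (intro exI[of _ "A \<inter> B"]) auto
  qed
  have "Int_stable (sets N)" unfolding Int_stable_def by (auto intro: sets.Int)
  hence IS: "Int_stable (E i)" for i
    unfolding E_def using rvI by simp
  have ind': "indep_sets E {0,1,2}" using ind unfolding E_def .
  have Hm': "H \<in> measurable M lborel" and Zm': "Z \<in> measurable M lborel" using Hm Zm by auto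
  have c2: "indep_sets (\<lambda>j. sigma_sets (space M) (\<Union>i\<in>(if j then {2} else {1::nat}). E i)) UNIV"
  proof (rule indep_sets_collect_sigma)
    have "(\<Union>j. if j then {2} else {1::nat}) = {1,2}" by (auto split: if_splits)
    thus "indep_sets E (\<Union>j\<in>UNIV. if j then {2} else {1::nat})"
      using indep_sets_mono_index[OF _ ind'] by auto
    show "\<And>i j. j \<in> UNIV \<Longrightarrow> i \<in> (if j then {2} else {1}) \<Longrightarrow> Int_stable (E i)" using IS by auto
    show "disjoint_family_on (\<lambda>j. if j then {2} else {1::nat}) UNIV"
      by (auto simp: disjoint_family_on_def)
  qed
  show "indep_var lborel H lborel Z"
    unfolding indep_var_def indep_vars_def2
  proof
    show "\<forall>i\<in>UNIV. random_variable (case_bool lborel lborel i) (case_bool H Z i)"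
      using Hm' Zm' by (auto split: bool.split)
    show "indep_sets (\<lambda>i. {case_bool H Z i -` A \<inter> space M |A. A \<in> sets (case_bool lborel lborel i)}) UNIV"
    proof (rule indep_sets_mono_sets[OF c2])
      fix i :: bool assume "i \<in> UNIV"
      show "{case_bool H Z i -` A \<inter> space M |A. A \<in> sets (case_bool lborel lborel i)}
          \<subseteq> sigma_sets (space M) (\<Union>i\<in>(if i then {2} else {1::nat}). E i)"
      proof (cases i)
        case True
        have e: "(\<Union>i\<in>(if True then {2} else {1::nat}). E i) = rv_events M H" by (simp add: E_def)
        have "i = True" using True by simp
        show ?thesis unfolding \<open>i = True\<close> unfolding e unfolding rv_events_def by (auto intro: sigma_sets.Basic)
      next
        case False
        have e: "(\<Union>i\<in>(if False then {2} else {1::nat}). E i) = rv_events M Z" by (simp add: E_def)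
        have "i = False" using False by simp
        show ?thesis unfolding \<open>i = False\<close> unfolding e unfolding rv_events_def by (auto intro: sigma_sets.Basic)
      qed
    qed
  qed
  have c1: "indep_sets (\<lambda>j. sigma_sets (space M) (\<Union>i\<in>(if j then {0} else {1,2::nat}). E i)) UNIV"
  proof (rule indep_sets_collect_sigma)
    have "(\<Union>j. if j then {0} else {1,2::nat}) = {0,1,2}" by (auto split: if_splits)
    thus "indep_sets E (\<Union>j\<in>UNIV. if j then {0} else {1,2::nat})"
      using ind' by auto
    show "\<And>i j. j \<in> UNIV \<Longrightarrow> i \<in> (if j then {0} else {1,2}) \<Longrightarrow> Int_stable (E i)" using IS by auto
    show "disjoint_family_on (\<lambda>j. if j then {0} else {1,2::nat}) UNIV"
      by (auto simp: disjoint_family_on_def)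
  qed
  define \<Sigma> where "\<Sigma> = sigma (space M) (rv_events M Z \<union> rv_events M H)"
  have rvP: "rv_events M V \<subseteq> Pow (space M)" for V :: "'a \<Rightarrow> real"
    unfolding rv_events_def by auto
  have sp\<Sigma>: "space \<Sigma> = space M" unfolding \<Sigma>_def by (simp add: space_measure_of_conv)
  have se\<Sigma>: "sets \<Sigma> = sigma_sets (space M) (rv_events M Z \<union> rv_events M H)"
    unfolding \<Sigma>_def using rvP by (simp add: sets_measure_of)
  have mV: "V \<in> measurable \<Sigma> lborel" if "rv_events M V \<subseteq> rv_events M Z \<union> rv_events M H" for V :: "'a \<Rightarrow> real"
  proof (rule measurableI)
    show "V x \<in> space lborel" for x by simp
    fix S :: "real set" assume "S \<in> sets lborel"
    hence "V -` S \<inter> space M \<in> rv_events M V" unfolding rv_events_def by auto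
    thus "V -` S \<inter> space \<Sigma> \<in> sets \<Sigma>" using that unfolding sp\<Sigma> se\<Sigma> by auto
  qed
  have W\<Sigma>: "(\<lambda>\<omega>. (H \<omega>, Z \<omega>)) \<in> measurable \<Sigma> (lborel \<Otimes>\<^sub>M lborel)"
    by (intro measurable_Pair mV) auto
  have YN: "(\<lambda>\<omega>. (indicator A \<omega> :: real, X \<omega>)) \<in> measurable N (lborel \<Otimes>\<^sub>M lborel)"
    using Xm A by (intro measurable_Pair) auto
  show "indep_var (lborel \<Otimes>\<^sub>M lborel) (\<lambda>\<omega>. (indicator A \<omega> :: real, X \<omega>)) (lborel \<Otimes>\<^sub>M lborel) (\<lambda>\<omega>. (H \<omega>, Z \<omega>))"
    unfolding indep_var_def indep_vars_def2
  proof
    have "(\<lambda>\<omega>. (indicator A \<omega> :: real, X \<omega>)) \<in> measurable M (lborel \<Otimes>\<^sub>M lborel)"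
      by (rule measurable_from_subalg[OF sub YN])
    moreover have "(\<lambda>\<omega>. (H \<omega>, Z \<omega>)) \<in> measurable M (lborel \<Otimes>\<^sub>M lborel)"
      using Hm' Zm' by (intro measurable_Pair) auto
    ultimately show "\<forall>i\<in>UNIV. random_variable (case_bool (lborel \<Otimes>\<^sub>M lborel) (lborel \<Otimes>\<^sub>M lborel) i) (case_bool (\<lambda>\<omega>. (indicator A \<omega> :: real, X \<omega>)) (\<lambda>\<omega>. (H \<omega>, Z \<omega>)) i)"
      by (auto split: bool.split)
    show "indep_sets (\<lambda>i. {case_bool (\<lambda>\<omega>. (indicator A \<omega> :: real, X \<omega>)) (\<lambda>\<omega>. (H \<omega>, Z \<omega>)) i -` S \<inter> space M |S. S \<in> sets (case_bool (lborel \<Otimes>\<^sub>M lborel) (lborel \<Otimes>\<^sub>M lborel) i)}) UNIV"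
    proof (rule indep_sets_mono_sets[OF c1])
      fix i :: bool assume "i \<in> UNIV"
      show "{case_bool (\<lambda>\<omega>. (indicator A \<omega> :: real, X \<omega>)) (\<lambda>\<omega>. (H \<omega>, Z \<omega>)) i -` S \<inter> space M |S. S \<in> sets (case_bool (lborel \<Otimes>\<^sub>M lborel) (lborel \<Otimes>\<^sub>M lborel) i)}
          \<subseteq> sigma_sets (space M) (\<Union>i\<in>(if i then {0} else {1,2::nat}). E i)"
      proof (cases i)
        case True
        have m: "(\<lambda>\<omega>. (indicator A \<omega> :: real, X \<omega>)) -` S \<inter> space M \<in> sets N" if "S \<in> sets (lborel \<Otimes>\<^sub>M lborel)" for S
          using measurable_sets[OF YN that] spN by simp
        have e: "(\<Union>i\<in>(if True then {0} else {1,2::nat}). E i) = sets N" by (simp add: E_def)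
        have "i = True" using True by simp
        show ?thesis unfolding \<open>i = True\<close> unfolding e using m by (auto intro: sigma_sets.Basic)
      next
        case False
        have m: "(\<lambda>\<omega>. (H \<omega>, Z \<omega>)) -` S \<inter> space M \<in> sets \<Sigma>" if "S \<in> sets (lborel \<Otimes>\<^sub>M lborel)" for S
          using measurable_sets[OF W\<Sigma> that] sp\<Sigma> by simp
        moreover have "(\<Union>i\<in>(if False then {0} else {1,2::nat}). E i) = rv_events M Z \<union> rv_events M H"
          by (auto simp: E_def)
        moreover have "i = False" using False by simp
        ultimately show ?thesis using m unfolding se\<Sigma> by auto
      qed
    qed
  qed
qed

lemma (in prob_space) main_prob:
  fixes N :: "'a measure" and X H Z :: "'a \<Rightarrow> real" and A :: "'a set" and B :: "real set" and \<Delta> :: real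
  assumes sub: "subalgebra M N" and Xm: "X \<in> borel_measurable N"
   and Hd: "distributed M lborel H (\<lambda>x. ennreal (laplace_density \<Delta> x))"
   and Zd: "distributed M lborel Z (\<lambda>x. ennreal (std_normal_density x))"
   and ind: "indep_sets (\<lambda>i::nat. if i = 0 then sets N else if i = 1 then rv_events M Z else rv_events M H) {0,1,2}"
   and D: "\<Delta> > 0" and A: "A \<in> sets N" and B[measurable]: "B \<in> sets borel"
  shows "emeasure M (A \<inter> {\<omega> \<in> space M. exp (X \<omega> + H \<omega>) * Z \<omega> \<in> B})
       = (\<integral>\<^sup>+\<omega>\<in>A. (\<integral>\<^sup>+x\<in>B. ennreal (eps_density \<Delta> (X \<omega>) x) \<partial>lborel) \<partial>M)"
proof -
  have Hm[measurable]: "H \<in> borel_measurable M" using distributed_measurable[OF Hd] by simp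
  have Zm[measurable]: "Z \<in> borel_measurable M" using distributed_measurable[OF Zd] by simp
  have Xm'[measurable]: "X \<in> borel_measurable M" by (rule measurable_from_subalg[OF sub Xm])
  have AM[measurable]: "A \<in> sets M" using sub A by (auto simp: subalgebra_def)
  note I = indeps[OF sub Xm Hm Zm ind A]
  define Y where "Y = (\<lambda>\<omega>. (indicator A \<omega> :: real, X \<omega>))"
  define W where "W = (\<lambda>\<omega>. (H \<omega>, Z \<omega>))"
  have Ym[measurable]: "Y \<in> measurable M (lborel \<Otimes>\<^sub>M lborel)" unfolding Y_def by measurable
  have Wm[measurable]: "W \<in> measurable M (lborel \<Otimes>\<^sub>M lborel)" unfolding W_def by measurable
  have distW: "distr M (lborel \<Otimes>\<^sub>M lborel) W = density (lborel \<Otimes>\<^sub>M lborel) (\<lambda>(x,y). ennreal (laplace_density \<Delta> x) * ennreal (std_normal_density y))"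
    unfolding W_def
    by (rule distributed_distr_eq_density[OF distributed_joint_indep[OF sigma_finite_lborel sigma_finite_lborel Hd Zd I(1)]])
  have joint: "distr M (lborel \<Otimes>\<^sub>M lborel) Y \<Otimes>\<^sub>M distr M (lborel \<Otimes>\<^sub>M lborel) W
      = distr M ((lborel \<Otimes>\<^sub>M lborel) \<Otimes>\<^sub>M (lborel \<Otimes>\<^sub>M lborel)) (\<lambda>\<omega>. (Y \<omega>, W \<omega>))"
    using I(2) unfolding Y_def W_def by (simp add: indep_var_distribution_eq)
  interpret W': prob_space "distr M (lborel \<Otimes>\<^sub>M lborel) W" by (rule prob_space_distr) measurable
  define G where "G = (\<lambda>(y::real\<times>real, w::real\<times>real). ennreal (fst y) * indicator B (exp (snd y + fst w) * snd w))"
  have Gm[measurable]: "G \<in> borel_measurable ((lborel \<Otimes>\<^sub>M lborel) \<Otimes>\<^sub>M (lborel \<Otimes>\<^sub>M lborel))"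
    unfolding G_def by measurable
  have "emeasure M (A \<inter> {\<omega> \<in> space M. exp (X \<omega> + H \<omega>) * Z \<omega> \<in> B})
      = (\<integral>\<^sup>+\<omega>. indicator (A \<inter> {\<omega> \<in> space M. exp (X \<omega> + H \<omega>) * Z \<omega> \<in> B}) \<omega> \<partial>M)"
    by (rule nn_integral_indicator[symmetric]) measurable
  also have "\<dots> = (\<integral>\<^sup>+\<omega>. G (Y \<omega>, W \<omega>) \<partial>M)"
    by (intro nn_integral_cong) (auto simp: G_def Y_def W_def indicator_def)
  also have "\<dots> = (\<integral>\<^sup>+p. G p \<partial>distr M ((lborel \<Otimes>\<^sub>M lborel) \<Otimes>\<^sub>M (lborel \<Otimes>\<^sub>M lborel)) (\<lambda>\<omega>. (Y \<omega>, W \<omega>)))"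
    by (subst nn_integral_distr) measurable
  also have "\<dots> = (\<integral>\<^sup>+p. G p \<partial>(distr M (lborel \<Otimes>\<^sub>M lborel) Y \<Otimes>\<^sub>M distr M (lborel \<Otimes>\<^sub>M lborel) W))"
    by (simp add: joint)
  also have "\<dots> = (\<integral>\<^sup>+y. \<integral>\<^sup>+w. G (y, w) \<partial>distr M (lborel \<Otimes>\<^sub>M lborel) W \<partial>distr M (lborel \<Otimes>\<^sub>M lborel) Y)"
    by (rule W'.nn_integral_fst[symmetric]) simp
  also have "\<dots> = (\<integral>\<^sup>+\<omega>. \<integral>\<^sup>+w. G (Y \<omega>, w) \<partial>distr M (lborel \<Otimes>\<^sub>M lborel) W \<partial>M)"
    by (subst nn_integral_distr) measurable
  also have "\<dots> = (\<integral>\<^sup>+\<omega>. (\<integral>\<^sup>+x\<in>B. ennreal (eps_density \<Delta> (X \<omega>) x) \<partial>lborel) * indicator A \<omega> \<partial>M)"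
  proof (rule nn_integral_cong)
    fix \<omega>
    have Gw[measurable]: "(\<lambda>w. G (Y \<omega>, w)) \<in> borel_measurable (lborel \<Otimes>\<^sub>M lborel)"
      unfolding G_def by simp measurable
    have "(\<integral>\<^sup>+w. G (Y \<omega>, w) \<partial>distr M (lborel \<Otimes>\<^sub>M lborel) W)
       = (\<integral>\<^sup>+w. (\<lambda>(x,y). ennreal (laplace_density \<Delta> x) * ennreal (std_normal_density y)) w * G (Y \<omega>, w) \<partial>(lborel \<Otimes>\<^sub>M lborel))"
      unfolding distW by (subst nn_integral_density) auto
    also have "\<dots> = (\<integral>\<^sup>+u. \<integral>\<^sup>+w. (\<lambda>(x,y). ennreal (laplace_density \<Delta> x) * ennreal (std_normal_density y)) (u,w) * G (Y \<omega>, (u,w)) \<partial>lborel \<partial>lborel)"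
      by (rule lborel.nn_integral_fst[symmetric]) measurable
    also have "\<dots> = (\<integral>\<^sup>+u. ennreal (indicator A \<omega>) * (ennreal (laplace_density \<Delta> u) * (\<integral>\<^sup>+w. ennreal (std_normal_density w) * indicator B (exp (X \<omega> + u) * w) \<partial>lborel)) \<partial>lborel)"
    proof (rule nn_integral_cong)
      fix u
      show "(\<integral>\<^sup>+w. (\<lambda>(x,y). ennreal (laplace_density \<Delta> x) * ennreal (std_normal_density y)) (u,w) * G (Y \<omega>, (u,w)) \<partial>lborel)
          = ennreal (indicator A \<omega>) * (ennreal (laplace_density \<Delta> u) * (\<integral>\<^sup>+w. ennreal (std_normal_density w) * indicator B (exp (X \<omega> + u) * w) \<partial>lborel))"
        by (subst nn_integral_cmult[symmetric], measurable)+ (auto intro!: nn_integral_cong simp: G_def Y_def ac_simps)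
    qed
    also have "\<dots> = ennreal (indicator A \<omega>) * (\<integral>\<^sup>+u. ennreal (laplace_density \<Delta> u) * (\<integral>\<^sup>+w. ennreal (std_normal_density w) * indicator B (exp (X \<omega> + u) * w) \<partial>lborel) \<partial>lborel)"
      by (rule nn_integral_cmult) measurable
    also have "\<dots> = ennreal (indicator A \<omega>) * (\<integral>\<^sup>+x\<in>B. ennreal (eps_density \<Delta> (X \<omega>) x) \<partial>lborel)"
      by (simp add: kernel[OF B D])
    finally show "(\<integral>\<^sup>+w. G (Y \<omega>, w) \<partial>distr M (lborel \<Otimes>\<^sub>M lborel) W) = (\<integral>\<^sup>+x\<in>B. ennreal (eps_density \<Delta> (X \<omega>) x) \<partial>lborel) * indicator A \<omega>"
      by (simp add: ennreal_indicator mult.commute)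
  qed
  finally show ?thesis .
qed

theorem theorem2p1:
  fixes M :: "'a measure" and F :: "nat \<Rightarrow> 'a measure"
    and Hbar h z :: "nat \<Rightarrow> 'a \<Rightarrow> real" and \<Delta> :: real and t :: nat
  assumes "prob_space M"
    and filt_sub: "\<And>s. subalgebra M (F s)"
    and filt_mono: "\<And>s u. s \<le> u \<Longrightarrow> sets (F s) \<subseteq> sets (F u)"
    and Delta_pos: "\<Delta> > 0"
    and Hbar_meas: "\<And>s. s \<ge> 1 \<Longrightarrow> Hbar s \<in> borel_measurable (F (s - 1))"
    and Hbar_ce: "\<And>s. s \<ge> 1 \<Longrightarrow>
        AE \<omega> in M. Hbar s \<omega> = real_cond_exp M (F (s - 1)) (\<lambda>\<omega>. Hbar s \<omega> + h s \<omega>) \<omega>"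
    and h_laplace: "\<And>s. distributed M lborel (h s) (\<lambda>x. ennreal (laplace_density \<Delta> x))"
    and Delta_mean_abs: "\<And>s. prob_space.expectation M (\<lambda>\<omega>. \<bar>h s \<omega>\<bar>) = \<Delta>"
    and h_indep: "prob_space.indep_vars M (\<lambda>_. borel) h UNIV"
    and z_normal: "\<And>s. distributed M lborel (z s) (\<lambda>x. ennreal (std_normal_density x))"
    and z_indep: "prob_space.indep_vars M (\<lambda>_. borel) z UNIV"
    and zh_F_indep: "\<And>s. s \<ge> 1 \<Longrightarrow>
        prob_space.indep_sets M
          (\<lambda>i::nat. if i = 0 then sets (F (s - 1))
                    else if i = 1 then rv_events M (z s) else rv_events M (h s)) {0, 1, 2}"
    and t_pos: "t \<ge> 1"
  shows "\<forall>A\<in>sets (F (t - 1)). \<forall>B\<in>sets borel.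
           emeasure M (A \<inter> {\<omega> \<in> space M. exp (Hbar t \<omega> + h t \<omega>) * z t \<omega> \<in> B})
           = (\<integral>\<^sup>+\<omega>\<in>A. (\<integral>\<^sup>+x\<in>B. ennreal (eps_density \<Delta> (Hbar t \<omega>) x) \<partial>lborel) \<partial>M)"
proof (intro ballI)
  interpret prob_space M by fact
  fix A B assume A: "A \<in> sets (F (t - 1))" and B: "B \<in> sets (borel :: real measure)"
  show "emeasure M (A \<inter> {\<omega> \<in> space M. exp (Hbar t \<omega> + h t \<omega>) * z t \<omega> \<in> B})
           = (\<integral>\<^sup>+\<omega>\<in>A. (\<integral>\<^sup>+x\<in>B. ennreal (eps_density \<Delta> (Hbar t \<omega>) x) \<partial>lborel) \<partial>M)"
    by (rule main_prob[OF filt_sub Hbar_meas[OF t_pos] h_laplace z_normal zh_F_indep[OF t_pos] Delta_pos A B])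
qed

end
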